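(* For every integer $n\ge 1$: $\overline{\mathrm{spt}}(n)$ is odd if and only if $n$ is a square or twice a square; $\overline{\mathrm{spt}}_1(n)$ is odd if and only if $n$ is an odd square; $\overline{\mathrm{spt}}_2(n)$ is odd if and only if $n$ is an even square or twice a square.
   Context: An overpartition of $n$ is a partition of $n$ in which the first occurrence of each part size may (optionally) be overlined. $\overline{\mathrm{spt}}(n)$ is the total number of smallest parts, summed over all overpartitions of $n$ whose smallest part is not overlined (overpartitions whose smallest part is overlined contribute nothing). $\overline{\mathrm{spt}}_1(n)$ is the same count restricted to those overpartitions whose smallest part is odd, and $\overline{\mathrm{spt}}_2(n)$ is the same count restricted to those whose smallest part is even. For example $\overline{\mathrm{spt}}(4)=13$, $\overline{\mathrm{spt}}_1(4)=10$, $\overline{\mathrm{spt}}_2(4)=3$. *)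

theory Defs
  imports Main "HOL-Library.Multiset"
begin

text \<open>An overpartition of n is represented as a pair (P, Ov): P is the multiset of
  (positive) parts summing to n, and Ov is the set of part sizes whose first
  occurrence is overlined (so Ov must be a subset of the part sizes occurring in P).\<close>

definition overpartitions :: "nat \<Rightarrow> (nat multiset \<times> nat set) set" where
  "overpartitions n = {(P, Ov). (\<forall>x\<in>#P. 0 < x) \<and> sum_mset P = n \<and> Ov \<subseteq> set_mset P}"

definition smallest_part :: "nat multiset \<Rightarrow> nat" where
  "smallest_part P = Min (set_mset P)"

definition spt_bar_restr :: "(nat \<Rightarrow> bool) \<Rightarrow> nat \<Rightarrow> nat" where
  "spt_bar_restr Q n =
     (\<Sum>(P, Ov) \<in> {(P, Ov) \<in> overpartitions n. P \<noteq> {#} \<and> smallest_part P \<notin> Ov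
                                    \<and> Q (smallest_part P)}.
        count P (smallest_part P))"

definition spt_bar :: "nat \<Rightarrow> nat" where
  "spt_bar n = spt_bar_restr (\<lambda>_. True) n"

definition spt_bar1 :: "nat \<Rightarrow> nat" where
  "spt_bar1 n = spt_bar_restr odd n"

definition spt_bar2 :: "nat \<Rightarrow> nat" where
  "spt_bar2 n = spt_bar_restr even n"

end

theory Submission
  imports Defs
begin

lemma inv_sum_mod2:
  fixes g :: "'a \<Rightarrow> nat"
  assumes "finite A" "\<And>x. x\<in>A \<Longrightarrow> f x \<in> A" "\<And>x. x\<in>A \<Longrightarrow> f (f x) = x"
    "\<And>x. x\<in>A \<Longrightarrow> g (f x) = g x"
  shows "sum g A mod 2 = sum g {x\<in>A. f x = x} mod 2"
  using assms
proof (induction "card A" arbitrary: A rule: less_induct)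
  case less
  show ?case
  proof (cases "\<forall>x\<in>A. f x = x")
    case True
    then have "{x\<in>A. f x = x} = A" by auto
    then show ?thesis by simp
  next
    case False
    then obtain x where x: "x \<in> A" "f x \<noteq> x" by auto
    define A' where "A' = A - {x} - {f x}"
    have fx: "f x \<in> A - {x}" using x less.prems by auto
    have fin': "finite A'" using less.prems(1) A'_def by auto
    have cl: "f y \<in> A'" if y: "y \<in> A'" for y
    proof -
      have yA: "y \<in> A" "y \<noteq> x" "y \<noteq> f x" using y unfolding A'_def by auto
      have "f y \<in> A" using less.prems(2) yA by auto
      moreover have "f y \<noteq> x" using less.prems(3)[OF yA(1)] yA(3) by auto
      moreover have "f y \<noteq> f x" using less.prems(3)[OF yA(1)] less.prems(3)[OF x(1)] yA(2) by metis
      ultimately show ?thesis unfolding A'_def by auto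
    qed
    have lt: "card A' < card A" unfolding A'_def using x fx less.prems(1)
      using card_gt_0_iff[of A] by (auto simp: card_Diff1_less)
    have IH: "sum g A' mod 2 = sum g {y\<in>A'. f y = y} mod 2"
      using less.hyps[OF lt fin' cl] less.prems unfolding A'_def by auto
    have F: "{y\<in>A'. f y = y} = {y\<in>A. f y = y}"
      unfolding A'_def using x less.prems(3) by auto
    have "sum g A = g x + sum g (A - {x})"
      using x less.prems(1) by (simp add: sum.remove)
    also have "sum g (A - {x}) = g (f x) + sum g A'"
      unfolding A'_def using fx less.prems(1) by (simp add: sum.remove)
    finally have "sum g A = 2 * g x + sum g A'" using less.prems(4)[OF x(1)] by simp
    then show ?thesis using IH F by simp
  qed
qed

lemma inv_card_mod2:
  assumes "finite A" "\<And>x. x\<in>A \<Longrightarrow> f x \<in> A" "\<And>x. x\<in>A \<Longrightarrow> f (f x) = x"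
  shows "card A mod 2 = card {x\<in>A. f x = x} mod 2"
  using inv_sum_mod2[of A f "\<lambda>_. 1::nat"] assms by simp

lemma sum_mod2_card:
  fixes g :: "'a \<Rightarrow> nat"
  assumes "finite A"
  shows "sum g A mod 2 = card {x\<in>A. odd (g x)} mod 2"
proof -
  have "sum g A mod 2 = (\<Sum>x\<in>A. g x mod 2) mod 2" by (simp add: mod_sum_eq)
  also have "(\<Sum>x\<in>A. g x mod 2) = (\<Sum>x\<in>A. if odd (g x) then 1 else 0)"
    by (rule sum.cong) (auto simp: odd_iff_mod_2_eq_one)
  also have "\<dots> = card {x\<in>A. odd (g x)}"
    using assms by (simp add: sum.If_cases) (metis Collect_conj_eq Collect_mem_eq)
  finally show ?thesis .
qed

lemma card_divisors_odd:
  fixes n :: nat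
  assumes "1 \<le> n"
  shows "odd (card {d. d dvd n}) \<longleftrightarrow> (\<exists>k. n = k ^ 2)"
proof -
  have fin: "finite {d. d dvd n}" using assms by (simp add: finite_divisors_nat)
  have "card {d. d dvd n} mod 2 = card {d\<in>{d. d dvd n}. n div d = d} mod 2"
  proof (rule inv_card_mod2[OF fin])
    fix d assume "d \<in> {d. d dvd n}"
    then obtain e where e: "n = d * e" by auto
    have "d > 0" "e > 0" using e assms by (auto intro!: Nat.gr0I)
    then have "n div d = e" "n div e = d" using e by auto
    then show "n div d \<in> {d. d dvd n}" "n div (n div d) = d" using e by auto
  qed
  moreover have "card {d\<in>{d. d dvd n}. n div d = d} = (if \<exists>k. n = k ^ 2 then 1 else 0)"
  proof (cases "\<exists>k. n = k ^ 2")
    case True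
    then obtain k where k: "n = k ^ 2" by auto
    have "k > 0" using k assms by (cases k) auto
    have "{d\<in>{d. d dvd n}. n div d = d} = {k}"
    proof safe
      fix d assume d: "d dvd n" "n div d = d"
      then have "d * d = n" by (metis dvd_mult_div_cancel)
      then have "d ^ 2 = k ^ 2" using k by (simp add: power2_eq_square)
      then show "d = k" using power_eq_iff_eq_base[of 2 d k] by simp
    next
      show "k dvd n" using k by (simp add: power2_eq_square)
      show "n div k = k" using k \<open>k > 0\<close> by (simp add: power2_eq_square)
    qed
    then show ?thesis using True by simp
  next
    case False
    have E: "{d\<in>{d. d dvd n}. n div d = d} = {}"
    proof safe
      fix d assume d: "d dvd n" "n div d = d"
      then have "n = d ^ 2" by (metis dvd_mult_div_cancel power2_eq_square)
      then show "d \<in> {}" using False by auto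
    qed
    show ?thesis unfolding E using False by simp
  qed
  ultimately show ?thesis by (simp only: odd_iff_mod_2_eq_one) (auto split: if_splits)
qed


lemma parts_bound:
  fixes P :: "nat multiset"
  shows "(\<forall>x\<in>#P. 0 < x) \<Longrightarrow> size P \<le> sum_mset P \<and> (\<forall>x\<in>#P. x \<le> sum_mset P)"
  by (induction P) auto

lemma finite_overpartitions: "finite (overpartitions n)"
proof -
  have "overpartitions n \<subseteq> mset ` {xs. set xs \<subseteq> {..n} \<and> length xs \<le> n} \<times> Pow {..n}"
  proof
    fix z assume z0: "z \<in> overpartitions n"
    obtain P Ov where z: "z = (P, Ov)" by (cases z)
    have h: "\<forall>x\<in>#P. 0 < x" "sum_mset P = n" "Ov \<subseteq> set_mset P"
      using z0 unfolding z overpartitions_def by auto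
    obtain xs where xs: "P = mset xs" using ex_mset by metis
    have b: "size P \<le> n" "\<forall>x\<in>#P. x \<le> n" using parts_bound[OF h(1)] h(2) by auto
    have "P \<in> mset ` {xs. set xs \<subseteq> {..n} \<and> length xs \<le> n}"
      using b xs by (auto intro!: image_eqI[of _ _ xs])
    moreover have "Ov \<in> Pow {..n}" using h(3) b by auto
    ultimately show "z \<in> mset ` {xs. set xs \<subseteq> {..n} \<and> length xs \<le> n} \<times> Pow {..n}"
      unfolding z by blast
  qed
  moreover have "finite (mset ` {xs. set xs \<subseteq> {..n} \<and> length xs \<le> n} \<times> Pow {..n})"
    by (intro finite_cartesian_product finite_imageI finite_lists_length_le) auto
  ultimately show ?thesis by (rule finite_subset)
qed

definition tog :: "nat multiset \<times> nat set \<Rightarrow> nat multiset \<times> nat set" where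
  "tog = (\<lambda>(P, Ov). (P, if Max (set_mset P) = smallest_part P then Ov
            else if Max (set_mset P) \<in> Ov then Ov - {Max (set_mset P)} else insert (Max (set_mset P)) Ov))"

lemma key:
  fixes n :: nat
  assumes n: "1 \<le> n"
  shows "spt_bar_restr Q n mod 2 = card {s. s dvd n \<and> Q s \<and> odd (n div s)} mod 2"
proof -
  define X where "X = {(P, Ov) \<in> overpartitions n. P \<noteq> {#} \<and> smallest_part P \<notin> Ov
                                    \<and> Q (smallest_part P)}"
  define g where "g = (\<lambda>(P::nat multiset, Ov::nat set). count P (smallest_part P))"
  define S where "S = {s. s dvd n \<and> Q s}"
  define h where "h = (\<lambda>s::nat. (replicate_mset (n div s) s, {}::nat set))"
  have finX: "finite X" unfolding X_def
    by (rule finite_subset[OF _ finite_overpartitions[of n]]) auto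
  have finS: "finite S" unfolding S_def using n by (auto intro: finite_subset[OF _ finite_divisors_nat])
  have memX: "(P, Ov) \<in> X \<longleftrightarrow> (\<forall>x\<in>#P. 0 < x) \<and> sum_mset P = n \<and> Ov \<subseteq> set_mset P \<and>
      P \<noteq> {#} \<and> smallest_part P \<notin> Ov \<and> Q (smallest_part P)" for P Ov
    unfolding X_def overpartitions_def by auto
  have MaxIn: "Max (set_mset P) \<in> set_mset P" if "P \<noteq> {#}" for P :: "nat multiset"
    using that by (simp add: Max_in)
  have step: "sum g X mod 2 = sum g {x\<in>X. tog x = x} mod 2"
  proof (rule inv_sum_mod2[OF finX])
    fix x assume x: "x \<in> X"
    obtain P Ov where x': "x = (P, Ov)" by (cases x)
    have px: "(\<forall>x\<in>#P. 0 < x)" "sum_mset P = n" "Ov \<subseteq> set_mset P" "P \<noteq> {#}"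
       "smallest_part P \<notin> Ov" "Q (smallest_part P)" using x x' memX by auto
    have mi: "Max (set_mset P) \<in> set_mset P" using MaxIn px(4) .
    show "tog x \<in> X" unfolding x' tog_def using px mi by (auto simp: memX)
    show "tog (tog x) = x" unfolding x' tog_def using px mi by auto
    show "g (tog x) = g x" unfolding x' tog_def g_def by simp
  qed
  have fix_eq1: "{x\<in>X. tog x = x} \<subseteq> h ` S"
  proof safe
    fix P Ov assume a: "(P, Ov) \<in> X" "tog (P, Ov) = (P, Ov)"
    have px: "(\<forall>x\<in>#P. 0 < x)" "sum_mset P = n" "Ov \<subseteq> set_mset P" "P \<noteq> {#}"
       "smallest_part P \<notin> Ov" "Q (smallest_part P)" using a memX by auto
    define s where "s = smallest_part P"
    have mi: "Max (set_mset P) \<in> set_mset P" using MaxIn px(4) .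
    have eq: "Max (set_mset P) = s"
    proof (rule ccontr)
      assume "Max (set_mset P) \<noteq> s"
      then show False using a(2) mi unfolding tog_def s_def by (auto split: if_splits)
    qed
    have setP: "set_mset P = {s}"
    proof safe
      fix y assume "y \<in># P"
      then have "s \<le> y" "y \<le> Max (set_mset P)" unfolding s_def smallest_part_def by auto
      then show "y = s" using eq by simp
    next
      show "s \<in># P" unfolding s_def smallest_part_def using px(4) by (simp add: Min_in)
    qed
    have Ov: "Ov = {}" using px(3,5) setP unfolding s_def by auto
    have Prep: "P = replicate_mset (count P s) s"
      by (rule multiset_eqI) (metis setP count_replicate_mset count_eq_zero_iff singletonD)
    have "sum_mset P = count P s * s" by (subst Prep) simp
    then have nm: "n = count P s * s" using px(2) by simp
    have spos: "s > 0" using px(1) setP by auto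
    have "s dvd n" "n div s = count P s" using nm spos by auto
    then show "(P, Ov) \<in> h ` S" unfolding h_def S_def using Prep Ov px(6) s_def
      by (auto intro!: image_eqI[of _ _ s])
  qed
  have fix_eq2: "h ` S \<subseteq> {x\<in>X. tog x = x}"
  proof (rule image_subsetI)
    fix s assume "s \<in> S"
    then have s: "s dvd n" "Q s" unfolding S_def by auto
    have spos: "s > 0" using s n by (auto intro: Nat.gr0I)
    have "n = s * (n div s)" using s by simp
    then have mpos: "n div s > 0" using n by (cases "n div s") auto
    have setP: "set_mset (replicate_mset (n div s) s) = {s}" using mpos by simp
    have sp: "smallest_part (replicate_mset (n div s) s) = s" unfolding smallest_part_def setP by simp
    have "h s \<in> X" unfolding h_def memX using setP sp spos s mpos by auto
    moreover have "tog (h s) = h s" unfolding h_def tog_def using setP sp by simp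
    ultimately show "h s \<in> {x\<in>X. tog x = x}" by simp
  qed
  have fix_eq: "{x\<in>X. tog x = x} = h ` S" using fix_eq1 fix_eq2 by (rule antisym)
  have inS: "s \<in># replicate_mset (n div s) s" if "s \<in> S" for s
  proof -
    have s: "s dvd n" using that unfolding S_def by auto
    have "n = s * (n div s)" using s by simp
    then have mpos: "n div s > 0" using n by (cases "n div s") auto
    then show ?thesis by simp
  qed
  have injh: "inj_on h S" unfolding h_def inj_on_def
  proof (intro ballI impI)
    fix x y assume xy: "x \<in> S" "y \<in> S" "(replicate_mset (n div x) x, {}::nat set) = (replicate_mset (n div y) y, {})"
    then have "x \<in># replicate_mset (n div y) y" using inS[OF xy(1)] by simp
    then show "x = y" by (simp split: if_splits)
  qed
  have "sum g (h ` S) = (\<Sum>s\<in>S. n div s)"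
  proof (subst sum.reindex[OF injh], rule sum.cong)
    fix s assume "s \<in> S"
    then have s: "s dvd n" unfolding S_def by auto
    have spos: "s > 0" using s n by (auto intro: Nat.gr0I)
    have "n = s * (n div s)" using s by simp
    then have mpos: "n div s > 0" using n by (cases "n div s") auto
    have setP: "set_mset (replicate_mset (n div s) s) = {s}" using mpos by simp
    have sp: "smallest_part (replicate_mset (n div s) s) = s" unfolding smallest_part_def setP by simp
    show "(g \<circ> h) s = n div s" unfolding g_def h_def using sp by simp
  qed simp
  moreover have "spt_bar_restr Q n = sum g X" unfolding spt_bar_restr_def X_def g_def ..
  moreover have "{s\<in>S. odd (n div s)} = {s. s dvd n \<and> Q s \<and> odd (n div s)}" unfolding S_def by auto
  ultimately show ?thesis using step fix_eq sum_mod2_card[OF finS, of "\<lambda>s. n div s"] by simp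
qed


lemma sq_twice_iff:
  fixes m :: nat
  shows "((\<exists>k. 2 * m = k ^ 2) \<or> (\<exists>k. 2 * m = 2 * k ^ 2)) \<longleftrightarrow>
         ((\<exists>k. m = k ^ 2) \<or> (\<exists>k. m = 2 * k ^ 2))"
proof
  assume "(\<exists>k. 2 * m = k ^ 2) \<or> (\<exists>k. 2 * m = 2 * k ^ 2)"
  then show "(\<exists>k. m = k ^ 2) \<or> (\<exists>k. m = 2 * k ^ 2)"
  proof
    assume "\<exists>k. 2 * m = k ^ 2"
    then obtain k where k: "2 * m = k ^ 2" by auto
    then have "even (k ^ 2)" by (metis dvd_triv_left)
    then have "even k" by simp
    then obtain j where "k = 2 * j" by auto
    then have "m = 2 * j ^ 2" using k by (simp add: power2_eq_square)
    then show ?thesis by auto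
  qed auto
next
  assume "(\<exists>k. m = k ^ 2) \<or> (\<exists>k. m = 2 * k ^ 2)"
  then show "(\<exists>k. 2 * m = k ^ 2) \<or> (\<exists>k. 2 * m = 2 * k ^ 2)"
  proof
    assume "\<exists>k. m = 2 * k ^ 2"
    then obtain k where "m = 2 * k ^ 2" by auto
    then have "2 * m = (2 * k) ^ 2" by (simp add: power2_eq_square)
    then show ?thesis by blast
  qed auto
qed

lemma odd_set_eq:
  fixes n :: nat
  assumes "odd n"
  shows "{s. s dvd n \<and> odd (n div s)} = {d. d dvd n}"
proof safe
  fix x assume x: "x dvd n" "even (n div x)"
  have "n = x * (n div x)" using x(1) by simp
  then have "n div x dvd n" by (metis dvd_triv_right)
  then show False using x(2) assms dvd_trans by blast
qed

lemma T_lemma: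
  fixes n :: nat
  assumes "1 \<le> n"
  shows "odd (card {s. s dvd n \<and> odd (n div s)}) \<longleftrightarrow> (\<exists>k. n = k ^ 2) \<or> (\<exists>k. n = 2 * k ^ 2)"
  using assms
proof (induction n rule: less_induct)
  case (less n)
  show ?case
  proof (cases "odd n")
    case True
    have "\<not> (\<exists>k. n = 2 * k ^ 2)" using True by auto
    then show ?thesis using card_divisors_odd[OF less.prems] odd_set_eq[OF True] by simp
  next
    case False
    then obtain m where m: "n = 2 * m" by auto
    have m1: "1 \<le> m" "m < n" using m less.prems by auto
    have eq1: "{s. s dvd n \<and> odd (n div s)} \<subseteq> (\<lambda>t. 2 * t) ` {t. t dvd m \<and> odd (m div t)}"
    proof
      fix s assume "s \<in> {s. s dvd n \<and> odd (n div s)}"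
      then have s: "s dvd n" "odd (n div s)" by auto
      obtain e where e: "n = s * e" using s(1) by auto
      have spos: "s > 0" using e less.prems by (auto intro: Nat.gr0I)
      have ediv: "n div s = e" using e spos by simp
      have se: "s * e = 2 * m" using e m by simp
      have "even (s * e)" unfolding se by (rule dvd_triv_left)
      then have "even s" using s(2) ediv by simp
      then obtain t where t: "s = 2 * t" by auto
      have "m = t * e" using e m t by simp
      moreover have "t > 0" using t spos by simp
      ultimately have "t dvd m" "m div t = e" by auto
      then show "s \<in> (\<lambda>t. 2 * t) ` {t. t dvd m \<and> odd (m div t)}" using t s(2) ediv by auto
    qed
    have eq2: "(\<lambda>t. 2 * t) ` {t. t dvd m \<and> odd (m div t)} \<subseteq> {s. s dvd n \<and> odd (n div s)}"
    proof (rule image_subsetI)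
      fix t assume "t \<in> {t. t dvd m \<and> odd (m div t)}"
      then have t: "t dvd m" "odd (m div t)" by auto
      obtain e where e: "m = t * e" using t(1) by auto
      have tpos: "t > 0" using e m1 by (auto intro: Nat.gr0I)
      have "2 * t dvd n" using m e by simp
      moreover have "odd (n div (2 * t))" using m e tpos t(2) by simp
      ultimately show "2 * t \<in> {s. s dvd n \<and> odd (n div s)}" by simp
    qed
    have eq: "{s. s dvd n \<and> odd (n div s)} = (\<lambda>t. 2 * t) ` {t. t dvd m \<and> odd (m div t)}"
      using eq1 eq2 by (rule antisym)
    have "card {s. s dvd n \<and> odd (n div s)} = card {t. t dvd m \<and> odd (m div t)}"
      unfolding eq by (rule card_image) (auto simp: inj_on_def)
    then show ?thesis using less.IH[OF m1(2) m1(1)] sq_twice_iff[of m] m by simp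
  qed
qed


theorem theorem1p4:
  fixes n :: nat
  assumes "1 \<le> n"
  shows "(odd (spt_bar n) \<longleftrightarrow> (\<exists>k. n = k ^ 2) \<or> (\<exists>k. n = 2 * k ^ 2))
       \<and> (odd (spt_bar1 n) \<longleftrightarrow> odd n \<and> (\<exists>k. n = k ^ 2))
       \<and> (odd (spt_bar2 n) \<longleftrightarrow> (even n \<and> (\<exists>k. n = k ^ 2)) \<or> (\<exists>k. n = 2 * k ^ 2))"
proof -
  have par: "odd (spt_bar_restr Q n) \<longleftrightarrow> odd (card {s. s dvd n \<and> Q s \<and> odd (n div s)})" for Q
    using key[OF assms, of Q] by (simp add: odd_iff_mod_2_eq_one)
  have T: "odd (card {s. s dvd n \<and> odd (n div s)}) \<longleftrightarrow> (\<exists>k. n = k ^ 2) \<or> (\<exists>k. n = 2 * k ^ 2)"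
    by (rule T_lemma[OF assms])
  have 1: "odd (spt_bar n) \<longleftrightarrow> (\<exists>k. n = k ^ 2) \<or> (\<exists>k. n = 2 * k ^ 2)"
    using par[of "\<lambda>_. True"] T unfolding spt_bar_def by simp
  have 2: "odd (spt_bar1 n) \<longleftrightarrow> odd n \<and> (\<exists>k. n = k ^ 2)"
  proof (cases "odd n")
    case True
    have "{s. s dvd n \<and> odd s \<and> odd (n div s)} = {s. s dvd n \<and> odd (n div s)}"
      using True by (auto dest: dvd_trans[of _ n 2])
    then show ?thesis using par[of odd] T True unfolding spt_bar1_def by auto
  next
    case False
    have E: "{s. s dvd n \<and> odd s \<and> odd (n div s)} = {}"
    proof (rule equals0I)
      fix s assume "s \<in> {s. s dvd n \<and> odd s \<and> odd (n div s)}"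
      then have s: "s dvd n" "odd s" "odd (n div s)" by auto
      have "n = s * (n div s)" using s(1) by simp
      then have "odd n" using s(2,3) by (metis even_mult_iff)
      then show False using False by simp
    qed
    show ?thesis using par[of odd, unfolded E] False unfolding spt_bar1_def by simp
  qed
  have 3: "odd (spt_bar2 n) \<longleftrightarrow> (even n \<and> (\<exists>k. n = k ^ 2)) \<or> (\<exists>k. n = 2 * k ^ 2)"
  proof (cases "odd n")
    case True
    have E: "{s. s dvd n \<and> even s \<and> odd (n div s)} = {}"
    proof (rule equals0I)
      fix s assume "s \<in> {s. s dvd n \<and> even s \<and> odd (n div s)}"
      then have s: "s dvd n" "even s" "odd (n div s)" by auto
      then have "even n" using dvd_trans by blast
      then show False using True by simp
    qed
    moreover have "\<not> (\<exists>k. n = 2 * k ^ 2)" using True by auto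
    ultimately show ?thesis using par[of even, unfolded E] True unfolding spt_bar2_def by simp
  next
    case False
    have "{s. s dvd n \<and> even s \<and> odd (n div s)} = {s. s dvd n \<and> odd (n div s)}"
    proof -
      have "even s" if s: "s dvd n" "odd (n div s)" for s
      proof (rule ccontr)
        assume "odd s"
        have "n = s * (n div s)" using s(1) by simp
        then have "odd n" using s(2) \<open>odd s\<close> by (metis even_mult_iff)
        then show False using False by simp
      qed
      then show ?thesis by blast
    qed
    then show ?thesis using par[of even] T False unfolding spt_bar2_def by auto
  qed
  show ?thesis using 1 2 3 by blast
qed

end
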